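(* Let $(\gamma_i)_{i=0}^{n+1}$ be a linear sequence of geodesics in $\mathbb{H}^2$, and define $u_i$ ($0\le i\le n$) and $v_i$ ($1 \le i \le n$) as in the context. Let $D = d(\gamma_0, \gamma_{n+1})$. Suppose $u_0, u_n \le 1$. Then $$\Big| \sum_{i=1}^n v_i \Big| \le D + 2\log D - \log u_0 - \log u_n + 3.$$
   Context: A linear sequence of geodesics in $\mathbb{H}^2$ is a sequence of pairwise disjoint geodesics, consecutive ones having a common orthogonal, such that each geodesic separates those before it from those after it. Each $\gamma_i$ is oriented so that the geodesics following it lie to its left. Let $\eta_i$ be the common orthogonal of $\gamma_i$ and $\gamma_{i+1}$, oriented from $\gamma_i$ to $\gamma_{i+1}$; $u_i>0$ is the length of $\eta_i$ (the distance from $\gamma_i$ to $\gamma_{i+1}$), and $v_i$ is the signed distance along $\gamma_i$ (with its orientation) from the foot of $\eta_{i-1}$ on $\gamma_i$ to the foot of $\eta_i$ on $\gamma_i$. $d(\gamma_0,\gamma_{n+1})$ is the distance between the two geodesics. *)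

theory Defs
  imports "HOL-Analysis.Analysis"
begin

text \<open>Hyperboloid model of the hyperbolic plane in Minkowski space R^(2,1).\<close>

type_synonym pt = "real \<times> real \<times> real"

definition mink :: "pt \<Rightarrow> pt \<Rightarrow> real" where
  "mink x y = fst x * fst y + fst (snd x) * fst (snd y) - snd (snd x) * snd (snd y)"

definition hyp :: "pt set" where
  "hyp = {x. mink x x = -1 \<and> snd (snd x) > 0}"

definition hdist :: "pt \<Rightarrow> pt \<Rightarrow> real" where
  "hdist x y = arcosh (- mink x y)"

text \<open>An oriented geodesic is given by a base point p and a unit tangent w at p;
  its unit-speed parametrisation is t \<mapsto> cosh t p + sinh t w.\<close>
type_synonym geod = "pt \<times> pt"

definition geod_ok :: "geod \<Rightarrow> bool" where
  "geod_ok g \<longleftrightarrow> fst g \<in> hyp \<and> mink (fst g) (snd g) = 0 \<and> mink (snd g) (snd g) = 1"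

definition gpt :: "geod \<Rightarrow> real \<Rightarrow> pt" where
  "gpt g t = cosh t *\<^sub>R fst g + sinh t *\<^sub>R snd g"

definition gtan :: "geod \<Rightarrow> real \<Rightarrow> pt" where
  "gtan g t = sinh t *\<^sub>R fst g + cosh t *\<^sub>R snd g"

definition gset :: "geod \<Rightarrow> pt set" where
  "gset g = range (gpt g)"

text \<open>Euclidean 3x3 determinant, used to fix an orientation of the plane.\<close>
definition det3 :: "pt \<Rightarrow> pt \<Rightarrow> pt \<Rightarrow> real" where
  "det3 x y z =
     fst x * (fst (snd y) * snd (snd z) - snd (snd y) * fst (snd z))
   - fst (snd x) * (fst y * snd (snd z) - snd (snd y) * fst z)
   + snd (snd x) * (fst y * fst (snd z) - fst (snd y) * fst z)"

text \<open>Open half-planes to the left / right of an oriented geodesic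
  (independent of the chosen parametrisation of the oriented geodesic).\<close>
definition gleft :: "geod \<Rightarrow> pt set" where
  "gleft g = {x \<in> hyp. det3 (fst g) (snd g) x > 0}"

definition gright :: "geod \<Rightarrow> pt set" where
  "gright g = {x \<in> hyp. det3 (fst g) (snd g) x < 0}"

definition gdist :: "geod \<Rightarrow> geod \<Rightarrow> real" where
  "gdist g h = Inf {hdist x y | x y. x \<in> gset g \<and> y \<in> gset h}"

end

theory Submission imports Defs begin

definition lcross :: "pt \<Rightarrow> pt \<Rightarrow> pt" where
  "lcross a b = (fst (snd a) * snd (snd b) - snd (snd a) * fst (snd b),
                 snd (snd a) * fst b - fst a * snd (snd b),
                 -(fst a * fst (snd b) - fst (snd a) * fst b))"

lemma mink_lcross: "mink (lcross a b) x = det3 a b x"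
  by (simp add: mink_def lcross_def det3_def algebra_simps)

lemma mink_sym: "mink a b = mink b a"
  by (simp add: mink_def algebra_simps)

lemma mink_add1: "mink (a + b) c = mink a c + mink b c"
  by (simp add: mink_def algebra_simps)
lemma mink_add2: "mink c (a + b) = mink c a + mink c b"
  by (simp add: mink_def algebra_simps)
lemma mink_scale1: "mink (r *\<^sub>R a) c = r * mink a c"
  by (simp add: mink_def algebra_simps)
lemma mink_scale2: "mink c (r *\<^sub>R a) = r * mink c a"
  by (simp add: mink_def algebra_simps)

lemmas mink_lin = mink_add1 mink_add2 mink_scale1 mink_scale2

lemma binet: "mink (lcross a b) (lcross c d) = -(mink a c * mink b d - mink a d * mink b c)"
  by (simp add: mink_def lcross_def algebra_simps)

lemma cramer: "det3 a b c *\<^sub>R z = det3 z b c *\<^sub>R a + det3 a z c *\<^sub>R b + det3 a b z *\<^sub>R c"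
  by (cases a; cases b; cases c; cases z) (simp add: det3_def algebra_simps)

lemma gram: "mink x x * (mink M M * mink y y - mink M y * mink M y) - mink x M * (mink x M * mink y y - mink M y * mink x y)
   + mink x y * (mink x M * mink M y - mink M M * mink x y) = - (det3 x M y * det3 x M y)"
  by (simp add: mink_def det3_def algebra_simps)

lemma det3_aba: "det3 a b a = 0" by (simp add: det3_def algebra_simps)
lemma det3_abb: "det3 a b b = 0" by (simp add: det3_def algebra_simps)
lemma det3_swap13: "det3 a b c = - det3 c b a" by (simp add: det3_def algebra_simps)

lemma lcross_comb: "lcross (a *\<^sub>R p + b *\<^sub>R w) (c *\<^sub>R p + d *\<^sub>R w) = (a*d - b*c) *\<^sub>R lcross p w"
  by (cases p; cases w) (simp add: lcross_def algebra_simps)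

lemma lcross_lin1: "lcross (a *\<^sub>R p + b *\<^sub>R q) w = a *\<^sub>R lcross p w + b *\<^sub>R lcross q w"
  by (cases p; cases q; cases w) (simp add: lcross_def algebra_simps)

lemma lcross_scale2: "lcross p (e *\<^sub>R w) = e *\<^sub>R lcross p w"
  by (cases p; cases w) (simp add: lcross_def algebra_simps)

definition frame :: "pt \<Rightarrow> pt \<Rightarrow> bool" where
  "frame p w \<longleftrightarrow> mink p p = -1 \<and> mink p w = 0 \<and> mink w w = 1"

lemma frame_N:
  assumes "frame p w"
  shows "mink (lcross p w) (lcross p w) = 1" "mink (lcross p w) p = 0" "mink (lcross p w) w = 0"
proof -
  show "mink (lcross p w) (lcross p w) = 1"
    using assms unfolding frame_def binet by (simp add: mink_sym[of w p])
  show "mink (lcross p w) p = 0" "mink (lcross p w) w = 0"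
    by (simp_all only: mink_lcross det3_aba det3_abb)
qed

lemma frame_exp:
  assumes "frame p w"
  shows "z = (- mink z p) *\<^sub>R p + mink z w *\<^sub>R w + mink z (lcross p w) *\<^sub>R lcross p w"
proof -
  have f: "mink p p = -1" "mink p w = 0" "mink w w = 1" using assms by (auto simp: frame_def)
  have "det3 p w (lcross p w) = 1" using frame_N(1)[OF assms] by (simp only: mink_lcross)
  moreover have "det3 z w (lcross p w) = - mink z p"
    using f by (simp add: mink_lcross[symmetric] binet mink_sym[of w p])
  moreover have "det3 p z (lcross p w) = mink z w"
    using f by (simp add: mink_lcross[symmetric] binet mink_sym[of z p] mink_sym[of z w])
  moreover have "det3 p w z = mink z (lcross p w)"
    by (simp add: mink_lcross[symmetric] mink_sym)
  ultimately show ?thesis using cramer[of p w "lcross p w" z] by simp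
qed

lemma geod_frame:
  assumes "geod_ok g"
  shows "frame (gpt g t) (gtan g t)" "lcross (gpt g t) (gtan g t) = lcross (fst g) (snd g)"
proof -
  have f: "mink (fst g) (fst g) = -1" "mink (fst g) (snd g) = 0" "mink (snd g) (snd g) = 1"
    using assms by (auto simp: geod_ok_def hyp_def)
  have c: "cosh t * cosh t - sinh t * sinh t = 1" using hyperbolic_pythagoras[of t] by (simp add: power2_eq_square)
  show "frame (gpt g t) (gtan g t)"
    unfolding frame_def gpt_def gtan_def using f c
    by (simp add: mink_lin mink_sym[of "snd g" "fst g"] algebra_simps) 
  show "lcross (gpt g t) (gtan g t) = lcross (fst g) (snd g)"
    unfolding gpt_def gtan_def lcross_comb c by simp
qed

lemma gpt_shift:
  "gpt g b = cosh (b - a) *\<^sub>R gpt g a + sinh (b - a) *\<^sub>R gtan g a"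
  "gtan g b = sinh (b - a) *\<^sub>R gpt g a + cosh (b - a) *\<^sub>R gtan g a"
proof -
  have e: "b = a + (b - a)" by simp
  show "gpt g b = cosh (b - a) *\<^sub>R gpt g a + sinh (b - a) *\<^sub>R gtan g a"
    apply (subst e) unfolding gpt_def gtan_def cosh_add sinh_add
    by (simp add: scaleR_add_right scaleR_add_left algebra_simps)
  show "gtan g b = sinh (b - a) *\<^sub>R gpt g a + cosh (b - a) *\<^sub>R gtan g a"
    apply (subst e) unfolding gpt_def gtan_def cosh_add sinh_add
    by (simp add: scaleR_add_right scaleR_add_left algebra_simps)
qed

lemma gpt0: "gpt g 0 = fst g" "gtan g 0 = snd g"
  by (simp_all add: gpt_def gtan_def)

lemma gpt_hyp:
  assumes "geod_ok g" shows "gpt g t \<in> hyp"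
proof -
  obtain p1 p2 p3 where p: "fst g = (p1,p2,p3)" by (metis prod_cases3)
  obtain w1 w2 w3 where w: "snd g = (w1,w2,w3)" by (metis prod_cases3)
  have h: "p1*p1 + p2*p2 - p3*p3 = -1" "p3 > 0" "p1*w1 + p2*w2 - p3*w3 = 0" "w1*w1+w2*w2-w3*w3 = 1"
    using assms p w by (auto simp: geod_ok_def hyp_def mink_def)
  have "p3*p3 \<ge> 1 + w3*w3"
  proof -
    have "(p3*w3)*(p3*w3) = (p1*w1+p2*w2)*(p1*w1+p2*w2)" using h(3) by (simp add: algebra_simps)
    also have "\<dots> \<le> (p1*p1+p2*p2)*(w1*w1+w2*w2)"
    proof -
      have "(p1*p1+p2*p2)*(w1*w1+w2*w2) - (p1*w1+p2*w2)*(p1*w1+p2*w2) = (p1*w2 - p2*w1)^2"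
        by (simp add: power2_eq_square algebra_simps)
      then show ?thesis using zero_le_power2[of "p1*w2 - p2*w1"] by linarith
    qed
    also have "\<dots> = (p3*p3 - 1)*(1+w3*w3)"
    proof -
      have e1: "p1*p1+p2*p2 = p3*p3 - 1" using h(1) by linarith
      have e2: "w1*w1+w2*w2 = 1+w3*w3" using h(4) by linarith
      show ?thesis by (simp only: e1 e2)
    qed
    finally show ?thesis by (simp add: algebra_simps)
  qed
  then have "\<bar>w3\<bar>^2 < p3^2" by (simp add: power2_eq_square)
  then have a: "\<bar>w3\<bar> < p3" using h(2) power2_less_imp_less by fastforce
  have b: "\<bar>sinh t\<bar> < cosh t"
    using sinh_less_cosh_real[of "\<bar>t\<bar>"] by simp
  have "\<bar>sinh t * w3\<bar> \<le> \<bar>sinh t\<bar> * p3" using a by (simp add: abs_mult mult_left_mono)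
  also have "\<dots> < cosh t * p3" using b h(2) by (simp add: mult_strict_right_mono)
  finally have "0 < cosh t * p3 + sinh t * w3" by linarith
  moreover have "frame (gpt g t) (gtan g t)" using geod_frame[OF assms] by simp
  ultimately show ?thesis using p w by (simp add: hyp_def frame_def gpt_def)
qed

lemma hyp_mink_neg:
  assumes "x \<in> hyp" "y \<in> hyp" shows "mink x y < 0"
proof -
  obtain x1 x2 x3 where xx: "x = (x1,x2,x3)" by (metis prod_cases3)
  obtain y1 y2 y3 where yy: "y = (y1,y2,y3)" by (metis prod_cases3)
  have h: "x1*x1+x2*x2 = x3*x3 - 1" "x3 > 0" "y1*y1+y2*y2 = y3*y3 - 1" "y3 > 0"
    using assms xx yy by (auto simp: hyp_def mink_def algebra_simps)
  have "(x1*y1+x2*y2)^2 \<le> (x1*x1+x2*x2)*(y1*y1+y2*y2)"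
  proof -
    have "(x1*x1+x2*x2)*(y1*y1+y2*y2) - (x1*y1+x2*y2)^2 = (x1*y2 - x2*y1)^2"
      by (simp add: power2_eq_square algebra_simps)
    then show ?thesis using zero_le_power2[of "x1*y2 - x2*y1"] by linarith
  qed
  also have "\<dots> = (x3*x3 - 1)*(y3*y3-1)" by (simp only: h(1,3))
  also have "\<dots> < (x3*y3)^2"
  proof -
    have "(x3*x3 - 1)*(y3*y3-1) = (x3*y3)^2 - x3*x3 - y3*y3 + 1" by (simp add: power2_eq_square algebra_simps)
    moreover have "x3*x3 > 0" "y3*y3 > 0" using h(2,4) by simp_all
    moreover have "x3*x3 + y3*y3 > 1"
    proof -
      have "x1*x1 \<ge> 0" "x2*x2 \<ge> 0" by simp_all
      then have "x3*x3 \<ge> 1" using h(1) by linarith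
      then show ?thesis using \<open>y3*y3 > 0\<close> by linarith
    qed
    ultimately show ?thesis by linarith
  qed
  finally have "x1*y1+x2*y2 < x3*y3"
    using h(2,4) power2_less_imp_less[of "x1*y1+x2*y2" "x3*y3"] by simp
  then show ?thesis using xx yy by (simp add: mink_def)
qed

lemma step:
  assumes g: "geod_ok g" and h: "geod_ok h" and e: "geod_ok e" and u: "u > 0"
    and f0: "gpt e 0 = gpt g t" and p0: "mink (gtan e 0) (gtan g t) = 0"
    and f1: "gpt e u = gpt h s" and p1: "mink (gtan e u) (gtan h s) = 0"
    and lft: "gset h \<subseteq> gleft g"
  shows "\<exists>\<epsilon>. (\<epsilon> = 1 \<or> \<epsilon> = -1)
     \<and> gpt h s = cosh u *\<^sub>R gpt g t + sinh u *\<^sub>R lcross (fst g) (snd g)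
     \<and> gtan h s = \<epsilon> *\<^sub>R gtan g t
     \<and> lcross (fst h) (snd h) = \<epsilon> *\<^sub>R (sinh u *\<^sub>R gpt g t + cosh u *\<^sub>R lcross (fst g) (snd g))"
proof -
  define P where "P = gpt g t"
  define W where "W = gtan g t"
  define N where "N = lcross (fst g) (snd g)"
  have fr: "frame P W" and NPW: "N = lcross P W" using geod_frame[OF g, of t] by (auto simp: P_def W_def N_def)
  have fP: "mink P P = -1" "mink P W = 0" "mink W W = 1" using fr by (auto simp: frame_def)
  have fN: "mink N N = 1" "mink N P = 0" "mink N W = 0" using frame_N[OF fr] NPW by auto
  define Z where "Z = snd e"
  have eQ: "fst e = P" using f0 by (simp add: gpt0 P_def)
  have eZ: "mink P Z = 0" "mink Z Z = 1" using e eQ by (auto simp: geod_ok_def Z_def)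
  have ZW: "mink Z W = 0" using p0 by (simp add: gpt0 Z_def W_def)
  define k where "k = mink Z N"
  have Zk: "Z = k *\<^sub>R N"
    using frame_exp[OF fr, of Z] eZ ZW by (simp add: mink_sym[of Z P] NPW k_def)
  have k2: "k * k = 1" using eZ(2) fN(1) unfolding Zk by (simp add: mink_lin)
  have gu: "gpt e u = cosh u *\<^sub>R P + (sinh u * k) *\<^sub>R N"
    by (simp add: gpt_def eQ Zk[unfolded Z_def])
  have "gpt e u \<in> gleft g" using lft f1 by (auto simp: gset_def)
  then have "mink N (gpt e u) > 0" by (simp add: gleft_def mink_lcross N_def)
  then have "sinh u * k > 0" unfolding gu using fN by (simp add: mink_lin)
  then have "k > 0" using u by (simp add: zero_less_mult_iff)
  moreover have "(k - 1) * (k + 1) = 0" using k2 by (simp add: algebra_simps)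
  ultimately have k1: "k = 1" by simp
  have hs: "gpt h s = cosh u *\<^sub>R P + sinh u *\<^sub>R N" using f1 gu k1 by simp
  have tu: "gtan e u = sinh u *\<^sub>R P + cosh u *\<^sub>R N"
    by (simp add: gtan_def eQ Zk[unfolded Z_def] k1)
  define W' where "W' = gtan h s"
  have fr2: "frame (gpt h s) W'" using geod_frame[OF h] by (simp add: W'_def)
  have c1: "cosh u * mink W' P + sinh u * mink W' N = 0"
    using fr2 unfolding hs frame_def by (simp add: mink_lin mink_sym)
  have c2: "sinh u * mink W' P + cosh u * mink W' N = 0"
    using p1 unfolding tu by (simp add: mink_lin mink_sym W'_def)
  have py: "cosh u * cosh u - sinh u * sinh u = 1" using hyperbolic_pythagoras[of u] by (simp add: power2_eq_square)
  have a0: "mink W' P = 0"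
  proof -
    have "mink W' P = (cosh u * cosh u - sinh u * sinh u) * mink W' P" using py by simp
    also have "\<dots> = cosh u * (cosh u * mink W' P + sinh u * mink W' N) - sinh u * (sinh u * mink W' P + cosh u * mink W' N)"
      by (simp add: algebra_simps)
    finally show ?thesis using c1 c2 by simp
  qed
  have b0: "mink W' N = 0"
  proof -
    have "mink W' N = (cosh u * cosh u - sinh u * sinh u) * mink W' N" using py by simp
    also have "\<dots> = cosh u * (sinh u * mink W' P + cosh u * mink W' N) - sinh u * (cosh u * mink W' P + sinh u * mink W' N)"
      by (simp add: algebra_simps)
    finally show ?thesis using c1 c2 by simp
  qed
  define \<epsilon> where "\<epsilon> = mink W' W"
  have W'e: "W' = \<epsilon> *\<^sub>R W" using frame_exp[OF fr, of W'] a0 b0 by (simp add: NPW \<epsilon>_def)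
  have "\<epsilon> * \<epsilon> = 1" using fr2 fP unfolding frame_def W'e by (simp add: mink_lin)
  then have "(\<epsilon> - 1) * (\<epsilon> + 1) = 0" by (simp add: algebra_simps)
  then have eps: "\<epsilon> = 1 \<or> \<epsilon> = -1" by (simp add: eq_neg_iff_add_eq_0)
  have NWP: "lcross N W = P"
  proof -
    have "mink (lcross N W) P = det3 N W P" by (rule mink_lcross)
    also have "\<dots> = - det3 P W N" by (rule det3_swap13)
    also have "det3 P W N = mink N N" by (simp only: mink_lcross NPW)
    finally have "mink (lcross N W) P = -1" using fN(1) by simp
    moreover have "mink (lcross N W) W = 0" "mink (lcross N W) (lcross P W) = 0"
      by (simp_all add: mink_lcross det3_abb det3_aba NPW[symmetric])
    ultimately show ?thesis using frame_exp[OF fr, of "lcross N W"] by simp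
  qed
  have "lcross (fst h) (snd h) = lcross (gpt h s) (gtan h s)" using geod_frame[OF h] by simp
  also have "\<dots> = lcross (cosh u *\<^sub>R P + sinh u *\<^sub>R N) (\<epsilon> *\<^sub>R W)" using hs W'e W'_def by simp
  also have "\<dots> = \<epsilon> *\<^sub>R (sinh u *\<^sub>R P + cosh u *\<^sub>R N)"
    by (simp add: lcross_scale2 lcross_lin1 NWP NPW[symmetric] scaleR_add_right algebra_simps)
  finally show ?thesis using eps hs W'e W'_def by (auto simp: P_def N_def W_def)
qed

lemma sinh_ge: assumes "0 \<le> x" shows "x \<le> sinh (x::real)"
proof (cases "x = 0")
  case True then show ?thesis by simp
next
  case False
  then have x: "0 < x" using assms by simp
  have "\<exists>z. 0 < z \<and> z < x \<and> ((sinh x - x) - (sinh 0 - 0) = (x - 0) * (cosh z - 1))"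
    by (rule MVT2) (use x in \<open>auto intro!: derivative_eq_intros\<close>)
  then obtain z where "sinh x - x = x * (cosh z - 1)" by auto
  moreover have "cosh z - 1 \<ge> 0" using cosh_real_ge_1[of z] by simp
  ultimately show ?thesis using x by (metis diff_ge_0_iff_ge mult_nonneg_nonneg less_imp_le)
qed

lemma sinh_le_exp: assumes "0 \<le> D" shows "sinh D \<le> D * exp (D::real)"
proof -
  have "1 + (-2*D) \<le> exp (-2*D)" by (rule exp_ge_add_one_self)
  then have "exp D * (1 - 2*D) \<le> exp D * exp (-2*D)" by (simp add: mult_left_mono)
  also have "exp D * exp (-2*D) = exp (-D)" by (simp add: exp_add[symmetric])
  finally have "exp D - exp (-D) \<le> 2 * D * exp D" by (simp add: algebra_simps)
  then show ?thesis by (simp add: sinh_field_def)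
qed

lemma sinh_le_half_exp: "sinh D \<le> exp (D::real) / 2"
  using exp_gt_zero[of "-D"] by (simp add: sinh_field_def)

lemma cosh_sinh_half: "(cosh u - 1) / 2 = sinh (u/2) ^ 2" for u :: real
proof -
  have "cosh u = cosh (2 * (u/2))" by simp
  also have "\<dots> = 2 * (cosh (u/2))^2 - 1" by (rule cosh_double_cosh)
  also have "\<dots> = 2 * (sinh (u/2))^2 + 1" by (simp add: cosh_square_eq)
  finally show ?thesis by simp
qed

lemma cs_bound:
  assumes "\<bar>b\<bar> \<le> (a::real)" shows "sqrt (a*a - b*b) \<le> cosh r * a + sinh r * b"
proof -
  have py: "cosh r * cosh r - sinh r * sinh r = 1" using hyperbolic_pythagoras[of r] by (simp add: power2_eq_square)
  have sc: "\<bar>sinh r\<bar> \<le> cosh r" using sinh_le_cosh_real[of "\<bar>r\<bar>"] by simp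
  have "\<bar>sinh r * b\<bar> \<le> cosh r * a" unfolding abs_mult
    using assms sc by (intro mult_mono) auto
  then have X: "0 \<le> cosh r * a + sinh r * b" by linarith
  have "(cosh r * a + sinh r * b)^2 - (sinh r * a + cosh r * b)^2 = (cosh r * cosh r - sinh r * sinh r) * (a*a - b*b)"
    by (simp add: power2_eq_square algebra_simps)
  then have "(cosh r * a + sinh r * b)^2 = (a*a - b*b) + (sinh r * a + cosh r * b)^2" using py by simp
  then have "a*a - b*b \<le> (cosh r * a + sinh r * b)^2" by (metis le_add_same_cancel1 zero_le_power2)
  then have "sqrt (a*a - b*b) \<le> sqrt ((cosh r * a + sinh r * b)^2)" by (rule real_sqrt_le_mono)
  also have "\<dots> = cosh r * a + sinh r * b" using X by simp
  finally show ?thesis .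
qed

lemma lin_aux:
  fixes X T1 T2 SG A B sh :: real
  assumes "X = (A+B)/2 + T1 + T2" "0 \<le> T1" "0 \<le> T2" "sh \<le> SG" "0 < sh" "0 \<le> A" "0 \<le> B"
  shows "A \<le> X + SG + (A - B)/2" "sh \<le> X + SG + (A - B)/2"
        "B \<le> X + SG - (A - B)/2" "sh \<le> X + SG - (A - B)/2"
        "T1 \<le> X + SG - (A - B)/2" "T2 \<le> X + SG + (A - B)/2"
        "SG \<le> X + SG - (A - B)/2" "SG \<le> X + SG + (A - B)/2"
proof -
  show "A \<le> X + SG + (A - B)/2" using assms by argo
  show "sh \<le> X + SG + (A - B)/2" using assms by argo
  show "B \<le> X + SG - (A - B)/2" using assms by argo
  show "sh \<le> X + SG - (A - B)/2" using assms by argo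
  show "T1 \<le> X + SG - (A - B)/2" using assms by argo
  show "T2 \<le> X + SG + (A - B)/2" using assms by argo
  show "SG \<le> X + SG - (A - B)/2" using assms by argo
  show "SG \<le> X + SG + (A - B)/2" using assms by argo
qed

lemma key_ineq:
  assumes "1 \<le> (c::real)" "0 < sh" "0 \<le> A" "0 \<le> B" "1 \<le> G"
  shows "A \<le> c * ((A + B)/2) + sh * G + (A - B)/2" "sh \<le> c * ((A + B)/2) + sh * G + (A - B)/2"
        "B \<le> c * ((A + B)/2) + sh * G - (A - B)/2" "sh \<le> c * ((A + B)/2) + sh * G - (A - B)/2"
        "(c - 1)/2 * A \<le> c * ((A + B)/2) + sh * G - (A - B)/2"
        "(c - 1)/2 * B \<le> c * ((A + B)/2) + sh * G + (A - B)/2"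
        "sh * G \<le> c * ((A + B)/2) + sh * G - (A - B)/2"
        "sh * G \<le> c * ((A + B)/2) + sh * G + (A - B)/2"
proof -
  have "sh \<le> sh * G" using assms by (simp add: mult_left_mono[of 1 G sh, simplified])
  moreover have "0 \<le> (c - 1)/2 * B" "0 \<le> (c - 1)/2 * A" using assms by simp_all
  moreover have "c * ((A + B)/2) = (A+B)/2 + (c - 1)/2 * A + (c - 1)/2 * B" by (simp add: field_simps)
  ultimately show "A \<le> c * ((A + B)/2) + sh * G + (A - B)/2" "sh \<le> c * ((A + B)/2) + sh * G + (A - B)/2"
        "B \<le> c * ((A + B)/2) + sh * G - (A - B)/2" "sh \<le> c * ((A + B)/2) + sh * G - (A - B)/2"
        "(c - 1)/2 * A \<le> c * ((A + B)/2) + sh * G - (A - B)/2"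
        "(c - 1)/2 * B \<le> c * ((A + B)/2) + sh * G + (A - B)/2"
        "sh * G \<le> c * ((A + B)/2) + sh * G - (A - B)/2"
        "sh * G \<le> c * ((A + B)/2) + sh * G + (A - B)/2"
    using lin_aux[of "c * ((A + B)/2)" A B "(c - 1)/2 * A" "(c - 1)/2 * B" sh "sh * G"] assms
    by auto
qed

lemma cosh_le3: assumes "0 \<le> x" "x \<le> 1" shows "cosh (x::real) \<le> 3"
proof -
  have "cosh x \<le> cosh x + sinh x" using assms by simp
  also have "\<dots> = exp x" by (rule cosh_plus_sinh)
  also have "\<dots> \<le> exp 1" using assms by simp
  also have "\<dots> \<le> 3" by (rule exp_le)
  finally show ?thesis .
qed

lemma final_real:
  fixes D u0 un \<sigma> Q :: real
  assumes u0: "0 < u0" and un: "0 < un" and sig: "0 \<le> \<sigma>"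
    and Q1: "u0 * un * exp \<sigma> \<le> Q" and Q2: "(un/2)^2 * u0^2 * (exp \<sigma>)^2 \<le> Q"
    and QD: "Q \<le> sinh D * sinh D" and D0: "0 \<le> D"
  shows "\<sigma> \<le> D + 2 * ln D - ln u0 - ln un + 3"
proof -
  define L where "L = u0 * un * exp \<sigma>"
  have L0: "0 < L" using u0 un by (simp add: L_def)
  have lnL: "ln L = ln u0 + ln un + \<sigma>" using u0 un by (simp add: L_def ln_mult)
  have "0 < sinh D * sinh D" using L0 Q1 QD L_def by linarith
  then have "D \<noteq> 0" by auto
  then have Dp: "0 < D" using D0 by simp
  show ?thesis
  proof (cases "1 \<le> D")
    case True
    have "(L/2)^2 \<le> Q" using Q2 by (simp add: L_def power_mult_distrib power2_eq_square field_simps)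
    also have "\<dots> \<le> sinh D * sinh D" by (rule QD)
    also have "\<dots> \<le> (exp D / 2) * (exp D / 2)"
      using sinh_le_half_exp[of D] Dp by (intro mult_mono) auto
    finally have "(L/2)^2 \<le> (exp D / 2)^2" by (simp add: power2_eq_square)
    then have "L/2 \<le> exp D / 2" by (rule power2_le_imp_le) simp
    then have "L \<le> exp D" by simp
    then have "ln L \<le> D" using L0 by (metis exp_gt_zero ln_exp ln_le_cancel_iff)
    moreover have "0 \<le> ln D" using True by simp
    ultimately show ?thesis using lnL by argo
  next
    case False
    have "L \<le> Q" using Q1 by (simp add: L_def)
    also have "\<dots> \<le> sinh D * sinh D" by (rule QD)
    also have "\<dots> \<le> (D * exp D) * (D * exp D)"
      using sinh_le_exp[OF D0] Dp by (intro mult_mono) auto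
    finally have "ln L \<le> ln ((D * exp D) * (D * exp D))" using L0 by simp
    also have "\<dots> = 2 * ln D + 2 * D" using Dp by (simp add: ln_mult)
    finally show ?thesis using lnL False by argo
  qed
qed

theorem lemmaA13:
  fixes n :: nat
    and \<gamma> :: "nat \<Rightarrow> geod"   \<comment> \<open>the geodesics gamma_0 .. gamma_(n+1)\<close>
    and \<eta> :: "nat \<Rightarrow> geod"   \<comment> \<open>common orthogonals eta_0 .. eta_n\<close>
    and u s t :: "nat \<Rightarrow> real"
  assumes geods: "\<And>i. i \<le> Suc n \<Longrightarrow> geod_ok (\<gamma> i)"
    and disj: "\<And>i j. i \<le> Suc n \<Longrightarrow> j \<le> Suc n \<Longrightarrow> i \<noteq> j \<Longrightarrow> gset (\<gamma> i) \<inter> gset (\<gamma> j) = {}"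
    and left: "\<And>i j. i < j \<Longrightarrow> j \<le> Suc n \<Longrightarrow> gset (\<gamma> j) \<subseteq> gleft (\<gamma> i)"
    and sep: "\<And>i j. 1 \<le> i \<Longrightarrow> i \<le> n \<Longrightarrow> j < i \<Longrightarrow> gset (\<gamma> j) \<subseteq> gright (\<gamma> i)"
    and orth_ok: "\<And>i. i \<le> n \<Longrightarrow> geod_ok (\<eta> i)"
    and u_pos: "\<And>i. i \<le> n \<Longrightarrow> u i > 0"
    and foot0: "\<And>i. i \<le> n \<Longrightarrow> gpt (\<eta> i) 0 = gpt (\<gamma> i) (t i)"
    and perp0: "\<And>i. i \<le> n \<Longrightarrow> mink (gtan (\<eta> i) 0) (gtan (\<gamma> i) (t i)) = 0"
    and foot1: "\<And>i. i \<le> n \<Longrightarrow> gpt (\<eta> i) (u i) = gpt (\<gamma> (Suc i)) (s (Suc i))"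
    and perp1: "\<And>i. i \<le> n \<Longrightarrow> mink (gtan (\<eta> i) (u i)) (gtan (\<gamma> (Suc i)) (s (Suc i))) = 0"
    and u0: "u 0 \<le> 1"
    and un: "u n \<le> 1"
  shows "\<bar>\<Sum>i=1..n. t i - s i\<bar>
           \<le> gdist (\<gamma> 0) (\<gamma> (Suc n)) + 2 * ln (gdist (\<gamma> 0) (\<gamma> (Suc n)))
              - ln (u 0) - ln (u n) + 3"
proof -
  define N where "N i = lcross (fst (\<gamma> i)) (snd (\<gamma> i))" for i
  define P where "P i = gpt (\<gamma> i) (t i)" for i
  define W where "W i = gtan (\<gamma> i) (t i)" for i
  define \<alpha> where "\<alpha> i = mink (N 0) (P i)" for i
  define \<beta> where "\<beta> i = mink (N 0) (W i)" for i
  define G where "G i = mink (N 0) (N i)" for i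
  define A where "A i = \<alpha> i + \<beta> i" for i
  define B where "B i = \<alpha> i - \<beta> i" for i
  define S where "S i = (\<Sum>k=1..i. t k - s k)" for i
  define c where "c i = cosh (u i)" for i
  define sh where "sh i = sinh (u i)" for i
  have c1: "1 \<le> c i" for i by (simp add: c_def cosh_real_ge_1)
  have shpos: "0 < sh i" if "i \<le> n" for i using u_pos[OF that] by (simp add: sh_def)
  have \<alpha>AB: "\<alpha> i = (A i + B i)/2" for i by (simp add: A_def B_def)
  have \<beta>AB: "\<beta> i = (A i - B i)/2" for i by (simp add: A_def B_def)
  have fr: "mink (P i) (P i) = -1 \<and> mink (P i) (W i) = 0 \<and> mink (W i) (W i) = 1
      \<and> mink (N i) (N i) = 1 \<and> mink (N i) (P i) = 0 \<and> mink (N i) (W i) = 0"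
    if "i \<le> Suc n" for i
  proof -
    have g: "geod_ok (\<gamma> i)" using geods that by simp
    have f: "frame (P i) (W i)" and e: "N i = lcross (P i) (W i)"
      using geod_frame[OF g, of "t i"] by (auto simp: P_def W_def N_def)
    show ?thesis using f frame_N[OF f] unfolding e by (auto simp: frame_def)
  qed
  have stp: "\<exists>\<epsilon>. (\<epsilon> = 1 \<or> \<epsilon> = -1) \<and> gpt (\<gamma> (Suc i)) (s (Suc i)) = c i *\<^sub>R P i + sh i *\<^sub>R N i
     \<and> gtan (\<gamma> (Suc i)) (s (Suc i)) = \<epsilon> *\<^sub>R W i \<and> N (Suc i) = \<epsilon> *\<^sub>R (sh i *\<^sub>R P i + c i *\<^sub>R N i)"
    if i: "i \<le> n" for i
  proof -
    have g1: "geod_ok (\<gamma> i)" "geod_ok (\<gamma> (Suc i))" using geods i by simp_all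
    have l: "gset (\<gamma> (Suc i)) \<subseteq> gleft (\<gamma> i)" using left[of i "Suc i"] i by simp
    show ?thesis
      using step[OF g1 orth_ok[OF i] u_pos[OF i] foot0[OF i] perp0[OF i] foot1[OF i] perp1[OF i] l]
      by (simp add: P_def W_def N_def c_def sh_def)
  qed
  have stp1: "gpt (\<gamma> (Suc i)) (s (Suc i)) = c i *\<^sub>R P i + sh i *\<^sub>R N i
     \<and> gtan (\<gamma> (Suc i)) (s (Suc i)) = W i \<and> N (Suc i) = sh i *\<^sub>R P i + c i *\<^sub>R N i"
    if i: "i < n" for i
  proof -
    obtain \<epsilon> where e: "\<epsilon> = 1 \<or> \<epsilon> = -1" "gpt (\<gamma> (Suc i)) (s (Suc i)) = c i *\<^sub>R P i + sh i *\<^sub>R N i"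
      "gtan (\<gamma> (Suc i)) (s (Suc i)) = \<epsilon> *\<^sub>R W i" "N (Suc i) = \<epsilon> *\<^sub>R (sh i *\<^sub>R P i + c i *\<^sub>R N i)"
      using stp[of i] i by auto
    have "P i \<in> gset (\<gamma> i)" by (simp add: P_def gset_def)
    then have "P i \<in> gright (\<gamma> (Suc i))" using sep[of "Suc i" i] i by auto
    then have "mink (N (Suc i)) (P i) < 0" by (simp add: gright_def N_def mink_lcross)
    then have "\<epsilon> * (sh i * mink (P i) (P i) + c i * mink (N i) (P i)) < 0" using e(4) by (simp add: mink_lin)
    then have "\<epsilon> * (- sh i) < 0" using fr[of i] i by simp
    then have "\<epsilon> = 1" using e(1) shpos[of i] i by auto
    then show ?thesis using e by simp
  qed
  have shift: "P i = cosh (t i - s i) *\<^sub>R gpt (\<gamma> i) (s i) + sinh (t i - s i) *\<^sub>R gtan (\<gamma> i) (s i)"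
     "W i = sinh (t i - s i) *\<^sub>R gpt (\<gamma> i) (s i) + cosh (t i - s i) *\<^sub>R gtan (\<gamma> i) (s i)" for i
    using gpt_shift[of "\<gamma> i" "t i" "s i"] by (simp_all add: P_def W_def)
  have rec: "A (Suc i) = exp (t (Suc i) - s (Suc i)) * (c i * ((A i + B i)/2) + sh i * G i + (A i - B i)/2)
     \<and> B (Suc i) = exp (- (t (Suc i) - s (Suc i))) * (c i * ((A i + B i)/2) + sh i * G i - (A i - B i)/2)
     \<and> G (Suc i) = sh i * ((A i + B i)/2) + c i * G i"
    if i: "i < n" for i
  proof -
    define v where "v = t (Suc i) - s (Suc i)"
    define X where "X = c i * \<alpha> i + sh i * G i"
    have e: "gpt (\<gamma> (Suc i)) (s (Suc i)) = c i *\<^sub>R P i + sh i *\<^sub>R N i"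
      "gtan (\<gamma> (Suc i)) (s (Suc i)) = W i" "N (Suc i) = sh i *\<^sub>R P i + c i *\<^sub>R N i"
      using stp1[OF i] by auto
    have a: "\<alpha> (Suc i) = cosh v * X + sinh v * \<beta> i"
      unfolding \<alpha>_def shift(1)[of "Suc i"] e by (simp add: mink_lin X_def v_def \<alpha>_def \<beta>_def G_def)
    have b: "\<beta> (Suc i) = sinh v * X + cosh v * \<beta> i"
      unfolding \<beta>_def shift(2)[of "Suc i"] e by (simp add: mink_lin X_def v_def \<alpha>_def \<beta>_def G_def)
    have g: "G (Suc i) = sh i * \<alpha> i + c i * G i"
      unfolding G_def e by (simp add: mink_lin \<alpha>_def)
    have "A (Suc i) = (cosh v + sinh v) * (X + \<beta> i)" unfolding A_def a b by (simp add: algebra_simps)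
    also have "\<dots> = exp v * (X + \<beta> i)" by (simp add: cosh_plus_sinh)
    finally have 1: "A (Suc i) = exp v * (X + \<beta> i)" .
    have "B (Suc i) = (cosh v - sinh v) * (X - \<beta> i)" unfolding B_def a b by (simp add: algebra_simps)
    also have "\<dots> = exp (-v) * (X - \<beta> i)" by (simp add: cosh_minus_sinh)
    finally have 2: "B (Suc i) = exp (-v) * (X - \<beta> i)" .
    show ?thesis using 1 2 g unfolding X_def v_def \<alpha>AB \<beta>AB by simp
  qed
  have base: "A 0 = 0" "B 0 = 0" "G 0 = 1"
    using fr[of 0] by (auto simp: A_def B_def G_def \<alpha>_def \<beta>_def)
  have S0: "S 0 = 0" by (simp add: S_def)
  have SS: "S (Suc i) = S i + (t (Suc i) - s (Suc i))" for i by (simp add: S_def)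
  have inv: "0 \<le> A i \<and> 0 \<le> B i \<and> 1 \<le> G i \<and> sh 0 * exp (S i) \<le> c i * ((A i + B i)/2) + sh i * G i + (A i - B i)/2
     \<and> sh 0 * exp (- S i) \<le> c i * ((A i + B i)/2) + sh i * G i - (A i - B i)/2
     \<and> (1 \<le> i \<longrightarrow> sh 0 * exp (S i) \<le> A i \<and> sh 0 * exp (- S i) \<le> B i)"
    if "i \<le> n" for i
    using that
  proof (induction i)
    case 0
    show ?case using base S0 by simp
  next
    case (Suc i)
    then have i: "i < n" by simp
    then have IH: "0 \<le> A i" "0 \<le> B i" "1 \<le> G i"
      "sh 0 * exp (S i) \<le> c i * ((A i + B i)/2) + sh i * G i + (A i - B i)/2"
      "sh 0 * exp (- S i) \<le> c i * ((A i + B i)/2) + sh i * G i - (A i - B i)/2"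
      using Suc.IH by auto
    define v where "v = t (Suc i) - s (Suc i)"
    have r: "A (Suc i) = exp v * (c i * ((A i + B i)/2) + sh i * G i + (A i - B i)/2)"
       "B (Suc i) = exp (- v) * (c i * ((A i + B i)/2) + sh i * G i - (A i - B i)/2)"
       "G (Suc i) = sh i * ((A i + B i)/2) + c i * G i"
      using rec[OF i] by (auto simp: v_def)
    have sp: "0 < sh i" "0 < sh (Suc i)" using shpos i Suc.prems by auto
    note k = key_ineq[OF c1[of i] sp(1) IH(1) IH(2) IH(3)]
    have A1: "sh 0 * exp (S (Suc i)) \<le> A (Suc i)"
    proof -
      have "sh 0 * exp (S (Suc i)) = exp v * (sh 0 * exp (S i))" by (simp add: SS v_def exp_add)
      also have "\<dots> \<le> A (Suc i)" unfolding r using IH(4) by simp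
      finally show ?thesis .
    qed
    have B1: "sh 0 * exp (- S (Suc i)) \<le> B (Suc i)"
    proof -
      have "sh 0 * exp (- S (Suc i)) = exp (-v) * (sh 0 * exp (- S i))" by (simp add: SS v_def exp_add[symmetric])
      also have "\<dots> \<le> B (Suc i)" unfolding r using IH(5) by simp
      finally show ?thesis .
    qed
    have A0: "0 \<le> A (Suc i)" unfolding r using k(1) IH(1) by simp
    have B0: "0 \<le> B (Suc i)" unfolding r using order.trans[OF IH(2) k(3)] by simp
    have G1: "1 \<le> G (Suc i)"
    proof -
      have "0 \<le> sh i * ((A i + B i)/2)" using sp IH by simp
      moreover have "G i \<le> c i * G i" using c1[of i] IH(3) mult_right_mono[of 1 "c i" "G i"] by simp
      ultimately show ?thesis unfolding r using IH(3) by argo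
    qed
    note k2 = key_ineq[OF c1[of "Suc i"] sp(2) A0 B0 G1]
    have "sh 0 * exp (S (Suc i)) \<le> c (Suc i) * ((A (Suc i) + B (Suc i))/2) + sh (Suc i) * G (Suc i) + (A (Suc i) - B (Suc i))/2"
      using A1 k2(1) by argo
    moreover have "sh 0 * exp (- S (Suc i)) \<le> c (Suc i) * ((A (Suc i) + B (Suc i))/2) + sh (Suc i) * G (Suc i) - (A (Suc i) - B (Suc i))/2"
      using B1 k2(3) by argo
    ultimately show ?case using A0 B0 G1 A1 B1 by simp
  qed
  have inv_n: "0 \<le> A n" "0 \<le> B n" "1 \<le> G n"
    "sh 0 * exp (S n) \<le> c n * ((A n + B n)/2) + sh n * G n + (A n - B n)/2"
    "sh 0 * exp (- S n) \<le> c n * ((A n + B n)/2) + sh n * G n - (A n - B n)/2"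
    "1 \<le> n \<Longrightarrow> sh 0 * exp (S n) \<le> A n" "1 \<le> n \<Longrightarrow> sh 0 * exp (- S n) \<le> B n"
    using inv[of n] by auto
  define Fp where "Fp = c n * ((A n + B n)/2) + sh n * G n + (A n - B n)/2"
  define Fm where "Fm = c n * ((A n + B n)/2) + sh n * G n - (A n - B n)/2"
  have shn: "0 < sh n" "0 < sh 0" using shpos by auto
  note kn = key_ineq[OF c1[of n] shn(1) inv_n(1) inv_n(2) inv_n(3), folded Fp_def Fm_def]
  have Fp0: "0 \<le> Fp" and Fm0: "0 \<le> Fm" using kn(1,3) inv_n(1,2) by auto
  have L1: "sh 0 * exp (S n) \<le> Fp" using inv_n(4) Fp_def by simp
  have L2: "sh 0 * exp (- S n) \<le> Fm" using inv_n(5) Fm_def by simp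
  have L5: "sh n \<le> Fp" "sh n \<le> Fm" using kn(2,4) .
  have cn0: "0 \<le> (c n - 1)/2" using c1[of n] by simp
  have L3: "(c n - 1)/2 * (sh 0 * exp (S n)) \<le> Fm"
  proof (cases "n = 0")
    case True
    have "c 0 \<le> 3" using cosh_le3[of "u 0"] u0 u_pos[of 0] by (simp add: c_def)
    then have "(c n - 1)/2 * (sh 0 * exp (S n)) \<le> 1 * (sh 0 * exp (S n))"
      using True shn by (intro mult_right_mono) auto
    then show ?thesis using True L2 S0 by simp
  next
    case False
    have "(c n - 1)/2 * (sh 0 * exp (S n)) \<le> (c n - 1)/2 * A n"
      using inv_n(6) False cn0 by (intro mult_left_mono) auto
    then show ?thesis using kn(5) by simp
  qed
  have L4: "(c n - 1)/2 * (sh 0 * exp (- S n)) \<le> Fp"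
  proof (cases "n = 0")
    case True
    have "c 0 \<le> 3" using cosh_le3[of "u 0"] u0 u_pos[of 0] by (simp add: c_def)
    then have "(c n - 1)/2 * (sh 0 * exp (- S n)) \<le> 1 * (sh 0 * exp (- S n))"
      using True shn by (intro mult_right_mono) auto
    then show ?thesis using True L1 S0 by simp
  next
    case False
    have "(c n - 1)/2 * (sh 0 * exp (- S n)) \<le> (c n - 1)/2 * B n"
      using inv_n(7) False cn0 by (intro mult_left_mono) auto
    then show ?thesis using kn(6) by simp
  qed
  define \<sigma> where "\<sigma> = \<bar>S n\<bar>"
  define Q where "Q = Fp * Fm"
  have Q1: "sh 0 * sh n * exp \<sigma> \<le> Q"
  proof (cases "0 \<le> S n")
    case True
    have "sh 0 * exp (S n) * sh n \<le> Fp * Fm" using L1 L5(2) shn Fp0 by (intro mult_mono) auto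
    then show ?thesis using True by (simp add: \<sigma>_def Q_def algebra_simps)
  next
    case False
    have "sh n * (sh 0 * exp (- S n)) \<le> Fp * Fm" using L2 L5(1) shn Fp0 by (intro mult_mono) auto
    then show ?thesis using False by (simp add: \<sigma>_def Q_def algebra_simps)
  qed
  have Q2: "(c n - 1)/2 * (sh 0 * exp \<sigma>) * (sh 0 * exp \<sigma>) \<le> Q"
  proof (cases "0 \<le> S n")
    case True
    have "(c n - 1)/2 * (sh 0 * exp (S n)) * (sh 0 * exp (S n)) \<le> Fm * Fp"
      using L3 L1 shn cn0 Fm0 by (intro mult_mono) auto
    then show ?thesis using True by (simp add: \<sigma>_def Q_def algebra_simps)
  next
    case False
    have "(c n - 1)/2 * (sh 0 * exp (- S n)) * (sh 0 * exp (- S n)) \<le> Fp * Fm"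
      using L4 L2 shn cn0 Fp0 by (intro mult_mono) auto
    then show ?thesis using False by (simp add: \<sigma>_def Q_def algebra_simps)
  qed
  define K where "K = sqrt Q"
  have Q0: "0 \<le> Q" using Fp0 Fm0 by (simp add: Q_def)
  have K0: "0 \<le> K" using Q0 by (simp add: K_def)
  have KK: "K * K = Q" using Q0 by (simp add: K_def)
  obtain \<epsilon> where e: "\<epsilon> = 1 \<or> \<epsilon> = -1" "gpt (\<gamma> (Suc n)) (s (Suc n)) = c n *\<^sub>R P n + sh n *\<^sub>R N n"
      "gtan (\<gamma> (Suc n)) (s (Suc n)) = \<epsilon> *\<^sub>R W n"
    using stp[of n] by auto
  have yb: "K \<le> mink (N 0) y" if y: "y \<in> gset (\<gamma> (Suc n))" for y
  proof -
    obtain r where r: "y = gpt (\<gamma> (Suc n)) r" using y by (auto simp: gset_def)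
    define \<rho> where "\<rho> = r - s (Suc n)"
    have "y = cosh \<rho> *\<^sub>R (c n *\<^sub>R P n + sh n *\<^sub>R N n) + sinh \<rho> *\<^sub>R (\<epsilon> *\<^sub>R W n)"
      using gpt_shift(1)[of "\<gamma> (Suc n)" r "s (Suc n)"] r e by (simp add: \<rho>_def)
    then have my: "mink (N 0) y = cosh \<rho> * (c n * \<alpha> n + sh n * G n) + sinh \<rho> * (\<epsilon> * \<beta> n)"
      by (simp add: mink_lin \<alpha>_def \<beta>_def G_def)
    have X: "c n * \<alpha> n + sh n * G n = (Fp + Fm)/2" "\<beta> n = (Fp - Fm)/2"
      by (simp_all add: Fp_def Fm_def \<alpha>AB \<beta>AB field_simps)
    have ab: "\<bar>\<epsilon> * \<beta> n\<bar> \<le> c n * \<alpha> n + sh n * G n"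
      using e(1) Fp0 Fm0 unfolding X by (auto simp: abs_mult)
    have "sqrt ((c n * \<alpha> n + sh n * G n) * (c n * \<alpha> n + sh n * G n) - (\<epsilon> * \<beta> n) * (\<epsilon> * \<beta> n)) \<le> mink (N 0) y"
      unfolding my by (rule cs_bound[OF ab])
    moreover have "(c n * \<alpha> n + sh n * G n) * (c n * \<alpha> n + sh n * G n) - (\<epsilon> * \<beta> n) * (\<epsilon> * \<beta> n) = Q"
    proof -
      have ee: "\<epsilon> * \<epsilon> = 1" using e(1) by auto
      have "(\<epsilon> * \<beta> n) * (\<epsilon> * \<beta> n) = (\<epsilon> * \<epsilon>) * (\<beta> n * \<beta> n)" by (simp only: mult_ac)
      also have "\<dots> = \<beta> n * \<beta> n" using ee by simp
      finally have eb: "(\<epsilon> * \<beta> n) * (\<epsilon> * \<beta> n) = \<beta> n * \<beta> n" .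
      have "((Fp + Fm)/2) * ((Fp + Fm)/2) - ((Fp - Fm)/2) * ((Fp - Fm)/2) = Fp * Fm"
        by (simp add: field_simps power2_eq_square)
      note hh = this
      show ?thesis apply (subst eb) unfolding X Q_def by (rule hh)
    qed
    ultimately show ?thesis by (simp add: K_def)
  qed
  have hb: "arsinh K \<le> hdist x y" if x: "x \<in> gset (\<gamma> 0)" and y: "y \<in> gset (\<gamma> (Suc n))" for x y
  proof -
    obtain r where r: "x = gpt (\<gamma> 0) r" using x by (auto simp: gset_def)
    have g0: "geod_ok (\<gamma> 0)" using geods by simp
    have gn: "geod_ok (\<gamma> (Suc n))" using geods by simp
    have xh: "x \<in> hyp" using gpt_hyp[OF g0] r by simp
    obtain r' where r': "y = gpt (\<gamma> (Suc n)) r'" using y by (auto simp: gset_def)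
    have yh: "y \<in> hyp" using gpt_hyp[OF gn] r' by simp
    have fx: "frame (gpt (\<gamma> 0) r) (gtan (\<gamma> 0) r)" "N 0 = lcross (gpt (\<gamma> 0) r) (gtan (\<gamma> 0) r)"
      using geod_frame[OF g0, of r] by (auto simp: N_def)
    have xN: "mink x (N 0) = 0" using frame_N(2)[OF fx(1)] fx(2) r by (simp add: mink_sym)
    have NN: "mink (N 0) (N 0) = 1" using fr[of 0] by simp
    have xx: "mink x x = -1" and yy: "mink y y = -1" using xh yh by (auto simp: hyp_def)
    have gr: "mink x y * mink x y = 1 + mink (N 0) y * mink (N 0) y + det3 x (N 0) y * det3 x (N 0) y"
      using gram[of x "N 0" y] xN NN xx yy by (simp add: algebra_simps)
    have Ky: "K \<le> mink (N 0) y" using yb[OF y] .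
    have "K * K \<le> mink (N 0) y * mink (N 0) y" using Ky K0 by (intro mult_mono) auto
    moreover have "0 \<le> det3 x (N 0) y * det3 x (N 0) y" by simp
    ultimately have m2: "1 + K * K \<le> mink x y * mink x y" using gr by argo
    have mneg: "mink x y < 0" using hyp_mink_neg[OF xh yh] .
    define m where "m = - mink x y"
    have mm: "1 + K * K \<le> m * m" using m2 by (simp add: m_def)
    have m1: "1 \<le> m"
    proof (rule ccontr)
      assume "\<not> 1 \<le> m"
      then have "m * m < 1 * 1" using mneg m_def by (intro mult_strict_mono) auto
      then show False using mm K0 by (smt (verit) mult_nonneg_nonneg)
    qed
    have "sinh (hdist x y) = sqrt (m^2 - 1)" using m1 by (simp add: hdist_def m_def sinh_arcosh_real)
    moreover have "K \<le> sqrt (m^2 - 1)"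
    proof -
      have "K * K \<le> m^2 - 1" using mm by (simp add: power2_eq_square)
      then have "sqrt (K * K) \<le> sqrt (m^2 - 1)" by (rule real_sqrt_le_mono)
      then show ?thesis using K0 by simp
    qed
    ultimately have "sinh (arsinh K) \<le> sinh (hdist x y)" by simp
    then show ?thesis by (simp only: sinh_real_le_iff)
  qed
  define D where "D = gdist (\<gamma> 0) (\<gamma> (Suc n))"
  have "arsinh K \<le> D" unfolding D_def gdist_def
  proof (rule cInf_greatest)
    show "{hdist x y |x y. x \<in> gset (\<gamma> 0) \<and> y \<in> gset (\<gamma> (Suc n))} \<noteq> {}"
    proof -
      have "hdist (gpt (\<gamma> 0) 0) (gpt (\<gamma> (Suc n)) 0) \<in> {hdist x y |x y. x \<in> gset (\<gamma> 0) \<and> y \<in> gset (\<gamma> (Suc n))}"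
        unfolding gset_def by blast
      then show ?thesis by blast
    qed
    show "arsinh K \<le> z" if "z \<in> {hdist x y |x y. x \<in> gset (\<gamma> 0) \<and> y \<in> gset (\<gamma> (Suc n))}" for z
      using that hb by auto
  qed
  note aKD = this
  have "sinh (arsinh K) \<le> sinh D" using aKD by (simp only: sinh_real_le_iff)
  then have KD: "K \<le> sinh D" by simp
  have "0 \<le> arsinh K" using K0 sinh_real_nonneg_iff[of "arsinh K"] by simp
  then have D0: "0 \<le> D" using aKD by simp
  have "K * K \<le> sinh D * sinh D" using KD K0 D0 by (intro mult_mono) auto
  then have QD: "Q \<le> sinh D * sinh D" using KK by simp
  have us: "u 0 \<le> sh 0" "u n \<le> sh n"
    using sinh_ge[of "u 0"] sinh_ge[of "u n"] u_pos[of 0] u_pos[of n] by (simp_all add: sh_def)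
  have up: "0 < u 0" "0 < u n" using u_pos by auto
  have Q1': "u 0 * u n * exp \<sigma> \<le> Q"
  proof -
    have "u 0 * u n * exp \<sigma> \<le> sh 0 * sh n * exp \<sigma>"
      using us up by (intro mult_right_mono mult_mono) auto
    then show ?thesis using Q1 by (meson order.trans)
  qed
  have Q2': "(u n / 2)^2 * (u 0)^2 * (exp \<sigma>)^2 \<le> Q"
  proof -
    have "(c n - 1)/2 = sinh (u n / 2)^2" unfolding c_def by (rule cosh_sinh_half)
    moreover have "u n / 2 \<le> sinh (u n / 2)" using up by (intro sinh_ge) simp
    ultimately have "(u n / 2)^2 \<le> (c n - 1)/2" using up by (simp add: power_mono)
    moreover have "(u 0 * exp \<sigma>)^2 \<le> (sh 0 * exp \<sigma>)^2" using us up by (intro power_mono mult_right_mono) auto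
    ultimately have "(u n / 2)^2 * (u 0 * exp \<sigma>)^2 \<le> (c n - 1)/2 * (sh 0 * exp \<sigma>)^2"
      using c1[of n] by (intro mult_mono) auto
    then show ?thesis using Q2 by (simp add: power2_eq_square algebra_simps)
  qed
  have "\<sigma> \<le> D + 2 * ln D - ln (u 0) - ln (u n) + 3"
    by (rule final_real[OF up(1) up(2) _ Q1' Q2' QD D0]) (simp add: \<sigma>_def)
  then show ?thesis by (simp add: \<sigma>_def S_def D_def)
qed

end
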